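(* A clone $\tau$-algebra $\mathbf C$ is minimal if and only if $\mathbf C$ is isomorphic to the clone $\mathcal V$-algebra $\mathbf{Cl}(\mathcal V)$ for some variety $\mathcal V$ of $\tau$-algebras.
   Context: A clone $\tau$-algebra is an algebra $\mathbf C=(C,\sigma^{\mathbf C}\ (\sigma\in\tau),q_n^{\mathbf C}\ (n\ge0),\mathsf e_i^{\mathbf C}\ (i\ge1))$ with $\mathsf e_i$ nullary, $q_n$ of arity $n+1$, satisfying: (C1) $q_n(\mathsf e_i,x_1,\dots,x_n)=x_i$ ($1\le i\le n$); (C2) $q_n(\mathsf e_j,x_1,\dots,x_n)=\mathsf e_j$ ($j>n$); (C3) $q_n(x,\mathsf e_1,\dots,\mathsf e_n)=x$; (C4) $q_k(x,y_1,\dots,y_k)=q_n(x,y_1,\dots,y_k,\mathsf e_{k+1},\dots,\mathsf e_n)$ ($n>k$); (C5) $q_n(q_n(x,\mathbf y),\mathbf z)=q_n(x,q_n(y_1,\mathbf z),\dots,q_n(y_n,\mathbf z))$; (C6) $q_n(\sigma(x_1,\dots,x_k),\mathbf y)=\sigma(q_n(x_1,\mathbf y),\dots,q_n(x_k,\mathbf y))$ for $\sigma\in\tau$ of arity $k$. $\mathbf C$ is minimal if $C$ equals the smallest subset of $C$ containing all $\mathsf e_i^{\mathbf C}$ and closed under the operations $\sigma^{\mathbf C}$ ($\sigma\in\tau$). For a variety $\mathcal V$ of $\tau$-algebras with free algebra $\mathbf F_{\mathcal V}$ over $\{v_1,v_2,\dots\}$, the clone $\mathcal V$-algebra $\mathbf{Cl}(\mathcal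 V)=(\mathbf F_{\mathcal V},q_n^{\mathbf F},\mathsf e_i^{\mathbf F})$ has $\mathsf e_i^{\mathbf F}=v_i$ and $q_n^{\mathbf F}(a,b_1,\dots,b_n)=s(a)$, where $s$ is the unique endomorphism of $\mathbf F_{\mathcal V}$ with $s(v_i)=b_i$ for $i\le n$ and $s(v_i)=v_i$ for $i>n$. *)

theory Defs
  imports Main
begin

text \<open>Terms over the countable set of variables
  v_1, v_2, ... ; the variable v_i is represented by Var (i - 1).\<close>

datatype 's trm = Var nat | App 's "'s trm list"

inductive wf_trm :: "('s \<Rightarrow> nat) \<Rightarrow> 's trm \<Rightarrow> bool" for ar where
  wf_Var: "wf_trm ar (Var i)"
| wf_App: "length ts = ar s \<Longrightarrow> (\<And>t. t \<in> set ts \<Longrightarrow> wf_trm ar t) \<Longrightarrow> wf_trm ar (App s ts)"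

primrec subst :: "(nat \<Rightarrow> 's trm) \<Rightarrow> 's trm \<Rightarrow> 's trm" where
  "subst f (Var i) = f i"
| "subst f (App s ts) = App s (map (subst f) ts)"

text \<open>Equational theories of varieties of tau-algebras: fully invariant congruences of
  the term algebra over countably many variables (Birkhoff correspondence between
  varieties and equational theories).\<close>

definition fi_congruence :: "('s \<Rightarrow> nat) \<Rightarrow> ('s trm \<times> 's trm) set \<Rightarrow> bool" where
  "fi_congruence ar \<theta> \<longleftrightarrow>
     equiv {t. wf_trm ar t} \<theta>
   \<and> (\<forall>s ts us. length ts = ar s \<and> length us = ar s \<and> list_all2 (\<lambda>t u. (t, u) \<in> \<theta>) ts us
          \<longrightarrow> (App s ts, App s us) \<in> \<theta>)
   \<and> (\<forall>f t u. (t, u) \<in> \<theta> \<and> (\<forall>i. wf_trm ar (f i)) \<longrightarrow> (subst f t, subst f u) \<in> \<theta>)"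

text \<open>sop s xs: the basic operation s applied to the list xs (of length ar s);
  qop n x ys: q_n(x, y_1, ..., y_n) with ys = [y_1, ..., y_n];
  eop i: the constant e_i (only i >= 1 is meaningful).\<close>

record ('s, 'c) clone_alg =
  carrier :: "'c set"
  sop :: "'s \<Rightarrow> 'c list \<Rightarrow> 'c"
  qop :: "nat \<Rightarrow> 'c \<Rightarrow> 'c list \<Rightarrow> 'c"
  eop :: "nat \<Rightarrow> 'c"

definition is_clone_alg :: "('s \<Rightarrow> nat) \<Rightarrow> ('s, 'c) clone_alg \<Rightarrow> bool" where
  "is_clone_alg ar A \<longleftrightarrow>
     (let C = carrier A; q = qop A; e = eop A; f = sop A in
     \<comment> \<open>closure: A is an algebra of the given type\<close>
       (\<forall>i\<ge>1. e i \<in> C)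
     \<and> (\<forall>s xs. length xs = ar s \<and> set xs \<subseteq> C \<longrightarrow> f s xs \<in> C)
     \<and> (\<forall>n x ys. x \<in> C \<and> length ys = n \<and> set ys \<subseteq> C \<longrightarrow> q n x ys \<in> C)
     \<comment> \<open>(C1)\<close>
     \<and> (\<forall>n i xs. 1 \<le> i \<and> i \<le> n \<and> length xs = n \<and> set xs \<subseteq> C \<longrightarrow> q n (e i) xs = xs ! (i - 1))
     \<comment> \<open>(C2)\<close>
     \<and> (\<forall>n j xs. j > n \<and> length xs = n \<and> set xs \<subseteq> C \<longrightarrow> q n (e j) xs = e j)
     \<comment> \<open>(C3)\<close>
     \<and> (\<forall>n x. x \<in> C \<longrightarrow> q n x (map e [1..<n+1]) = x)
     \<comment> \<open>(C4)\<close>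
     \<and> (\<forall>n k x ys. n > k \<and> x \<in> C \<and> length ys = k \<and> set ys \<subseteq> C \<longrightarrow>
           q k x ys = q n x (ys @ map e [k+1..<n+1]))
     \<comment> \<open>(C5)\<close>
     \<and> (\<forall>n x ys zs. x \<in> C \<and> length ys = n \<and> set ys \<subseteq> C \<and> length zs = n \<and> set zs \<subseteq> C \<longrightarrow>
           q n (q n x ys) zs = q n x (map (\<lambda>y. q n y zs) ys))
     \<comment> \<open>(C6)\<close>
     \<and> (\<forall>n s xs ys. length xs = ar s \<and> set xs \<subseteq> C \<and> length ys = n \<and> set ys \<subseteq> C \<longrightarrow>
           q n (f s xs) ys = f s (map (\<lambda>x. q n x ys) xs)))"

inductive_set generated :: "('s \<Rightarrow> nat) \<Rightarrow> ('s, 'c) clone_alg \<Rightarrow> 'c set" for ar A where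
  gen_e: "1 \<le> i \<Longrightarrow> eop A i \<in> generated ar A"
| gen_op: "length xs = ar s \<Longrightarrow> xs \<in> lists (generated ar A) \<Longrightarrow> sop A s xs \<in> generated ar A"

definition minimal_clone_alg :: "('s \<Rightarrow> nat) \<Rightarrow> ('s, 'c) clone_alg \<Rightarrow> bool" where
  "minimal_clone_alg ar A \<longleftrightarrow> carrier A = generated ar A"

definition clone_iso :: "('s \<Rightarrow> nat) \<Rightarrow> ('s, 'c) clone_alg \<Rightarrow> ('s, 'd) clone_alg \<Rightarrow> bool" where
  "clone_iso ar A B \<longleftrightarrow> (\<exists>h. bij_betw h (carrier A) (carrier B)
     \<and> (\<forall>i\<ge>1. h (eop A i) = eop B i)
     \<and> (\<forall>s xs. length xs = ar s \<and> set xs \<subseteq> carrier A \<longrightarrow> h (sop A s xs) = sop B s (map h xs))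
     \<and> (\<forall>n x ys. x \<in> carrier A \<and> length ys = n \<and> set ys \<subseteq> carrier A \<longrightarrow>
           h (qop A n x ys) = qop B n (h x) (map h ys)))"

text \<open>For the variety V with equational theory theta, the free algebra F_V is the
  quotient of the term algebra by theta; elements are theta-classes.  Operations are
  computed on chosen representatives (well defined since theta is a fully invariant
  congruence).  q_n(a, b_1..b_n) applies the substitution v_i |-> b_i (i <= n),
  v_i |-> v_i (i > n).\<close>

definition rep :: "'a set \<Rightarrow> 'a" where
  "rep X = (SOME t. t \<in> X)"

definition clone_of_var :: "('s \<Rightarrow> nat) \<Rightarrow> ('s trm \<times> 's trm) set \<Rightarrow> ('s, 's trm set) clone_alg" where
  "clone_of_var ar \<theta> =
     \<lparr> carrier = {t. wf_trm ar t} // \<theta>,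
       sop = (\<lambda>s Xs. \<theta> `` {App s (map rep Xs)}),
       qop = (\<lambda>n X Ys. \<theta> `` {subst (\<lambda>j. if j < n then rep (Ys ! j) else Var j) (rep X)}),
       eop = (\<lambda>i. \<theta> `` {Var (i - 1)}) \<rparr>"

end

theory Submission
  imports Defs
begin

primrec ev :: "('s, 'c) clone_alg \<Rightarrow> 's trm \<Rightarrow> 'c" where
  "ev A (Var i) = eop A (Suc i)"
| "ev A (App s ts) = sop A s (map (ev A) ts)"

primrec vars :: "'s trm \<Rightarrow> nat set" where
  "vars (Var i) = {i}"
| "vars (App s ts) = \<Union>(set (map vars ts))"

lemma finite_vars: "finite (vars t)"
  by (induction t) auto

lemma cl_all1: "is_clone_alg ar A \<Longrightarrow> (\<forall>i\<ge>1. eop A i \<in> carrier A)"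
  unfolding is_clone_alg_def Let_def by (elim conjE) assumption

lemma cl_all2: "is_clone_alg ar A \<Longrightarrow> (\<forall>s xs. length xs = ar s \<and> set xs \<subseteq> carrier A \<longrightarrow> sop A s xs \<in> carrier A)"
  unfolding is_clone_alg_def Let_def by (elim conjE) assumption

lemma cl_all3: "is_clone_alg ar A \<Longrightarrow> (\<forall>n i xs. 1 \<le> i \<and> i \<le> n \<and> length xs = n \<and> set xs \<subseteq> carrier A \<longrightarrow> qop A n (eop A i) xs = xs ! (i - 1))"
  unfolding is_clone_alg_def Let_def by (elim conjE) assumption

lemma cl_all4: "is_clone_alg ar A \<Longrightarrow> (\<forall>n k x ys. n > k \<and> x \<in> carrier A \<and> length ys = k \<and> set ys \<subseteq> carrier A \<longrightarrow>
           qop A k x ys = qop A n x (ys @ map (eop A) [k+1..<n+1]))"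
  unfolding is_clone_alg_def Let_def by (elim conjE) assumption

lemma cl_all5: "is_clone_alg ar A \<Longrightarrow> (\<forall>n s xs ys. length xs = ar s \<and> set xs \<subseteq> carrier A \<and> length ys = n \<and> set ys \<subseteq> carrier A \<longrightarrow>
           qop A n (sop A s xs) ys = sop A s (map (\<lambda>x. qop A n x ys) xs))"
  unfolding is_clone_alg_def Let_def by (elim conjE) assumption

lemma cl_e: "is_clone_alg ar A \<Longrightarrow> 1 \<le> i \<Longrightarrow> eop A i \<in> carrier A"
  using cl_all1 by blast
lemma cl_s: "is_clone_alg ar A \<Longrightarrow> length xs = ar s \<Longrightarrow> set xs \<subseteq> carrier A \<Longrightarrow> sop A s xs \<in> carrier A"
  using cl_all2 by blast
lemma cl_C1: "is_clone_alg ar A \<Longrightarrow> 1 \<le> i \<Longrightarrow> i \<le> n \<Longrightarrow> length xs = n \<Longrightarrow> set xs \<subseteq> carrier A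
   \<Longrightarrow> qop A n (eop A i) xs = xs ! (i - 1)"
  using cl_all3 by blast
lemma cl_C4: "is_clone_alg ar A \<Longrightarrow> n > k \<Longrightarrow> x \<in> carrier A \<Longrightarrow> length ys = k \<Longrightarrow> set ys \<subseteq> carrier A \<Longrightarrow>
           qop A k x ys = qop A n x (ys @ map (eop A) [k+1..<n+1])"
  using cl_all4 by blast
lemma cl_C6: "is_clone_alg ar A \<Longrightarrow> length xs = ar s \<Longrightarrow> set xs \<subseteq> carrier A \<Longrightarrow> length ys = n \<Longrightarrow> set ys \<subseteq> carrier A \<Longrightarrow>
           qop A n (sop A s xs) ys = sop A s (map (\<lambda>x. qop A n x ys) xs)"
  using cl_all5 by blast

lemma ev_in: assumes A: "is_clone_alg ar A" shows "wf_trm ar t \<Longrightarrow> ev A t \<in> carrier A"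
proof (induction t rule: wf_trm.induct)
  case (wf_Var i)
  then show ?case by (simp add: cl_e[OF A])
next
  case (wf_App ts s)
  then show ?case by (auto intro!: cl_s[OF A])
qed

lemma subst_wf: "wf_trm ar t \<Longrightarrow> (\<And>i. wf_trm ar (g i)) \<Longrightarrow> wf_trm ar (subst g t)"
proof (induction t rule: wf_trm.induct)
  case (wf_Var i)
  then show ?case by simp
next
  case (wf_App ts s)
  then show ?case by (auto intro!: wf_trm.wf_App)
qed

lemma ev_subst:
  assumes A: "is_clone_alg ar A" and g: "\<And>i. wf_trm ar (g i)"
  shows "wf_trm ar t \<Longrightarrow> (\<forall>i\<in>vars t. i < N) \<Longrightarrow>
     ev A (subst g t) = qop A N (ev A t) (map (\<lambda>j. ev A (g j)) [0..<N])"
proof (induction t rule: wf_trm.induct)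
  case (wf_Var i)
  have "qop A N (eop A (Suc i)) (map (\<lambda>j. ev A (g j)) [0..<N]) = (map (\<lambda>j. ev A (g j)) [0..<N]) ! i"
    using wf_Var by (subst cl_C1[OF A]) (auto intro: ev_in[OF A g])
  then show ?case using wf_Var by simp
next
  case (wf_App ts s)
  define ys where "ys = map (\<lambda>j. ev A (g j)) [0..<N]"
  have ys: "length ys = N" "set ys \<subseteq> carrier A" unfolding ys_def using ev_in[OF A g] by auto
  have st: "set (map (ev A) ts) \<subseteq> carrier A" using wf_App.hyps(2) ev_in[OF A] by auto
  have "qop A N (sop A s (map (ev A) ts)) ys = sop A s (map (\<lambda>x. qop A N x ys) (map (ev A) ts))"
    by (rule cl_C6[OF A]) (use wf_App.hyps(1) st ys in auto)
  also have "map (\<lambda>x. qop A N x ys) (map (ev A) ts) = map (ev A) (map (subst g) ts)"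
    using wf_App.IH wf_App.prems unfolding ys_def by auto
  finally show ?case unfolding ys_def by simp
qed

lemma gen_ev: "c \<in> generated ar A \<Longrightarrow> \<exists>t. wf_trm ar t \<and> ev A t = c"
proof (induction rule: generated.induct)
  case (gen_e i)
  then show ?case by (intro exI[of _ "Var (i - 1)"]) (auto intro: wf_trm.wf_Var)
next
  case (gen_op xs s)
  define r where "r = (\<lambda>x. SOME t. wf_trm ar t \<and> ev A t = x)"
  have r: "wf_trm ar (r x) \<and> ev A (r x) = x" if "x \<in> set xs" for x
  proof -
    have "\<exists>t. wf_trm ar t \<and> ev A t = x" using gen_op that by auto
    then show ?thesis unfolding r_def by (rule someI_ex)
  qed
  have "wf_trm ar (App s (map r xs))" using r gen_op.hyps by (auto intro!: wf_trm.wf_App)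
  moreover have "map (ev A) (map r xs) = xs" using r by (induction xs) auto
  ultimately show ?case by (intro exI[of _ "App s (map r xs)"]) simp
qed

lemma gen_sub: "is_clone_alg ar A \<Longrightarrow> generated ar A \<subseteq> carrier A"
proof
  fix c assume "is_clone_alg ar A" "c \<in> generated ar A"
  then show "c \<in> carrier A" using gen_ev ev_in by metis
qed

definition th :: "('s \<Rightarrow> nat) \<Rightarrow> ('s, 'c) clone_alg \<Rightarrow> ('s trm \<times> 's trm) set" where
  "th ar A = {(t, u). wf_trm ar t \<and> wf_trm ar u \<and> ev A t = ev A u}"

lemma th_fi: fixes ar :: "'s \<Rightarrow> nat" and A :: "('s, 'c) clone_alg" assumes A: "is_clone_alg ar A" shows "fi_congruence ar (th ar A)"
  unfolding fi_congruence_def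
proof (intro conjI allI impI)
  show "equiv {t. wf_trm ar t} (th ar A)"
    unfolding th_def by (rule equivI) (auto simp: refl_on_def sym_def trans_def)
next
  fix s ts us
  assume h: "length ts = ar s \<and> length us = ar s \<and> list_all2 (\<lambda>t u. (t, u) \<in> th ar A) ts us"
  then have "map (ev A) ts = map (ev A) us"
    by (auto simp: th_def list_all2_conv_all_nth intro: nth_equalityI)
  moreover have "\<forall>t\<in>set ts. wf_trm ar t" "\<forall>t\<in>set us. wf_trm ar t"
    using h by (auto simp: th_def list_all2_conv_all_nth in_set_conv_nth)
  ultimately show "(App s ts, App s us) \<in> th ar A"
    using h by (auto simp: th_def intro!: wf_trm.wf_App)
next
  fix f :: "nat \<Rightarrow> 's trm" and t u
  assume h: "(t, u) \<in> th ar A \<and> (\<forall>i. wf_trm ar (f i))"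
  define N where "N = Suc (Max (insert 0 (vars t \<union> vars u)))"
  have N: "\<forall>i\<in>vars t. i < N" "\<forall>i\<in>vars u. i < N"
    unfolding N_def using finite_vars by (auto simp: less_Suc_eq_le intro!: Max_ge)
  have "wf_trm ar t" "wf_trm ar u" "ev A t = ev A u" using h by (auto simp: th_def)
  then show "(subst f t, subst f u) \<in> th ar A"
    using ev_subst[OF A, of f, OF _ _ N(1)] ev_subst[OF A, of f, OF _ _ N(2)] h
    by (auto simp: th_def intro!: subst_wf)
qed

definition hh :: "('s \<Rightarrow> nat) \<Rightarrow> ('s, 'c) clone_alg \<Rightarrow> 'c \<Rightarrow> 's trm set" where
  "hh ar A c = {t. wf_trm ar t \<and> ev A t = c}"

lemma hh_class: "wf_trm ar t \<Longrightarrow> hh ar A (ev A t) = th ar A `` {t}"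
  by (auto simp: hh_def th_def)

lemma fwd:
  assumes A: "is_clone_alg ar A" and M: "carrier A = generated ar A"
  shows "clone_iso ar A (clone_of_var ar (th ar A))"
proof -
  have ex: "\<exists>t. wf_trm ar t \<and> ev A t = x" if "x \<in> carrier A" for x
    using gen_ev[of x ar A] M that by simp
  have rp: "wf_trm ar (rep (hh ar A x)) \<and> ev A (rep (hh ar A x)) = x" if "x \<in> carrier A" for x
  proof -
    have "\<exists>t. t \<in> hh ar A x" using ex[OF that] by (auto simp: hh_def)
    then have "rep (hh ar A x) \<in> hh ar A x" unfolding rep_def by (rule someI_ex)
    then show ?thesis by (simp add: hh_def)
  qed
  have inj: "inj_on (hh ar A) (carrier A)"
  proof (rule inj_onI)
    fix x y assume "x \<in> carrier A" "y \<in> carrier A" "hh ar A x = hh ar A y"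
    then show "x = y" using rp[of x] by (auto simp: hh_def)
  qed
  have img: "hh ar A ` carrier A = {t. wf_trm ar t} // th ar A"
  proof
    show "hh ar A ` carrier A \<subseteq> {t. wf_trm ar t} // th ar A"
    proof
      fix X assume "X \<in> hh ar A ` carrier A"
      then obtain x where x: "x \<in> carrier A" "X = hh ar A x" by blast
      then obtain t where "wf_trm ar t" "ev A t = x" using ex by blast
      then show "X \<in> {t. wf_trm ar t} // th ar A" using x hh_class[of ar t A]
        by (auto intro: quotientI)
    qed
  next
    show "{t. wf_trm ar t} // th ar A \<subseteq> hh ar A ` carrier A"
    proof
      fix X assume "X \<in> {t. wf_trm ar t} // th ar A"
      then obtain t where t: "wf_trm ar t" "X = th ar A `` {t}" by (auto elim: quotientE)
      then show "X \<in> hh ar A ` carrier A" using hh_class[OF t(1), of A] ev_in[OF A t(1)] by auto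
    qed
  qed
  show ?thesis unfolding clone_iso_def
  proof (intro exI[of _ "hh ar A"] conjI allI impI)
    show "bij_betw (hh ar A) (carrier A) (carrier (clone_of_var ar (th ar A)))"
      using inj img by (simp add: bij_betw_def clone_of_var_def)
  next
    fix i :: nat assume "1 \<le> i"
    then have "hh ar A (eop A i) = hh ar A (ev A (Var (i - 1)))" by simp
    also have "\<dots> = th ar A `` {Var (i - 1)}" by (rule hh_class) (rule wf_trm.wf_Var)
    also have "\<dots> = eop (clone_of_var ar (th ar A)) i" by (simp add: clone_of_var_def)
    finally show "hh ar A (eop A i) = eop (clone_of_var ar (th ar A)) i" .
  next
    fix s xs assume h: "length xs = ar s \<and> set xs \<subseteq> carrier A"
    define t where "t = App s (map rep (map (hh ar A) xs))"
    have "wf_trm ar t" unfolding t_def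
    proof (rule wf_trm.wf_App)
      show "length (map rep (map (hh ar A) xs)) = ar s" using h by simp
    next
      fix u assume "u \<in> set (map rep (map (hh ar A) xs))"
      then obtain x where "x \<in> set xs" "u = rep (hh ar A x)" by auto
      then show "wf_trm ar u" using rp h by auto
    qed
    moreover have "map (\<lambda>x. ev A (rep (hh ar A x))) xs = xs" by (rule map_idI) (use h rp in auto)
    then have "map (ev A) (map rep (map (hh ar A) xs)) = xs" by (simp add: comp_def)
    then have "ev A t = sop A s xs" unfolding t_def by simp
    ultimately show "hh ar A (sop A s xs) = sop (clone_of_var ar (th ar A)) s (map (hh ar A) xs)"
      using hh_class[of ar t A] by (simp add: clone_of_var_def t_def)
  next
    fix n x ys assume h: "x \<in> carrier A \<and> length ys = n \<and> set ys \<subseteq> carrier A"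
    define g where "g = (\<lambda>j. if j < n then rep (map (hh ar A) ys ! j) else Var j)"
    define t where "t = rep (hh ar A x)"
    have t: "wf_trm ar t" "ev A t = x" using rp h unfolding t_def by auto
    have g: "wf_trm ar (g j)" for j
    proof (cases "j < n")
      case True
      then have "ys ! j \<in> carrier A" using h by (auto intro: nth_mem)
      then show ?thesis using rp True h by (simp add: g_def)
    next
      case False
      then show ?thesis by (simp add: g_def wf_trm.wf_Var)
    qed
    define N where "N = n + Suc (Max (insert 0 (vars t)))"
    have N: "\<forall>i\<in>vars t. i < N" "n < N"
      unfolding N_def using finite_vars by (auto simp: less_Suc_eq_le intro!: Max_ge trans_le_add2)
    have "map (\<lambda>j. ev A (g j)) [0..<N] = map (\<lambda>j. ev A (g j)) [0..<n] @ map (\<lambda>j. ev A (g j)) [n..<N]"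
      using N(2) by (metis less_imp_le_nat map_append upt_add_eq_append zero_le le_add_diff_inverse)
    also have "map (\<lambda>j. ev A (g j)) [0..<n] = ys"
      using h rp[OF subsetD[OF _ nth_mem]] unfolding g_def by (auto intro!: nth_equalityI)
    also have "map (\<lambda>j. ev A (g j)) [n..<N] = map (eop A) [n+1..<N+1]"
    proof -
      have "map (\<lambda>j. ev A (g j)) [n..<N] = map (eop A \<circ> Suc) [n..<N]"
        by (rule map_cong) (auto simp: g_def)
      also have "\<dots> = map (eop A) (map Suc [n..<N])" by simp
      also have "\<dots> = map (eop A) [n+1..<N+1]" by (simp only: map_Suc_upt Suc_eq_plus1)
      finally show ?thesis .
    qed
    finally have m: "map (\<lambda>j. ev A (g j)) [0..<N] = ys @ map (eop A) [n+1..<N+1]" .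
    have "ev A (subst g t) = qop A n x ys"
      using ev_subst[OF A g t(1) N(1)] m t(2) cl_C4[OF A N(2), of x ys] h by simp
    moreover have "wf_trm ar (subst g t)" using subst_wf t(1) g by blast
    ultimately show "hh ar A (qop A n x ys) = qop (clone_of_var ar (th ar A)) n (hh ar A x) (map (hh ar A) ys)"
      using hh_class[of ar "subst g t" A] h by (simp add: clone_of_var_def g_def t_def)
  qed
qed

lemma rep_in: "equiv S \<theta> \<Longrightarrow> X \<in> S // \<theta> \<Longrightarrow> rep X \<in> X"
  unfolding rep_def by (metis equiv_class_self quotientE someI_ex)

lemma cov_gen:
  assumes F: "fi_congruence ar \<theta>"
  shows "wf_trm ar t \<Longrightarrow> \<theta> `` {t} \<in> generated ar (clone_of_var ar \<theta>)"
proof (induction t rule: wf_trm.induct)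
  case (wf_Var i)
  have "eop (clone_of_var ar \<theta>) (Suc i) \<in> generated ar (clone_of_var ar \<theta>)" by (rule gen_e) simp
  then show ?case by (simp add: clone_of_var_def)
next
  case (wf_App ts s)
  have E: "equiv {t. wf_trm ar t} \<theta>" using F by (simp add: fi_congruence_def)
  define Xs where "Xs = map (\<lambda>t. \<theta> `` {t}) ts"
  have "sop (clone_of_var ar \<theta>) s Xs \<in> generated ar (clone_of_var ar \<theta>)"
    by (rule gen_op) (use wf_App in \<open>auto simp: Xs_def\<close>)
  moreover have "(t, rep (\<theta> `` {t})) \<in> \<theta>" if "t \<in> set ts" for t
  proof -
    have "rep (\<theta> `` {t}) \<in> \<theta> `` {t}"
      by (rule rep_in[OF E]) (use that wf_App.hyps(2) in \<open>auto intro: quotientI\<close>)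
    then show ?thesis by simp
  qed
  then have "list_all2 (\<lambda>t u. (t, u) \<in> \<theta>) ts (map rep Xs)"
    unfolding Xs_def by (auto simp: list_all2_conv_all_nth)
  then have "(App s ts, App s (map rep Xs)) \<in> \<theta>"
    using F wf_App.hyps(1) unfolding fi_congruence_def Xs_def by auto
  then have "\<theta> `` {App s ts} = \<theta> `` {App s (map rep Xs)}"
    using equiv_class_eq_iff[OF E] by blast
  ultimately show ?case by (simp add: clone_of_var_def)
qed

lemma cov_min:
  assumes F: "fi_congruence ar \<theta>"
  shows "carrier (clone_of_var ar \<theta>) = generated ar (clone_of_var ar \<theta>)"
proof
  show "carrier (clone_of_var ar \<theta>) \<subseteq> generated ar (clone_of_var ar \<theta>)"
    using cov_gen[OF F] by (auto simp: clone_of_var_def elim!: quotientE)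
next
  have E: "equiv {t. wf_trm ar t} \<theta>" using F by (simp add: fi_congruence_def)
  show "generated ar (clone_of_var ar \<theta>) \<subseteq> carrier (clone_of_var ar \<theta>)"
  proof
    fix X assume "X \<in> generated ar (clone_of_var ar \<theta>)"
    then show "X \<in> carrier (clone_of_var ar \<theta>)"
    proof (induction rule: generated.induct)
      case (gen_e i)
      then show ?case by (auto simp: clone_of_var_def intro!: quotientI wf_trm.wf_Var)
    next
      case (gen_op Xs s)
      have "wf_trm ar (rep X)" if "X \<in> set Xs" for X
      proof -
        have q: "X \<in> {t. wf_trm ar t} // \<theta>" using gen_op that by (auto simp: clone_of_var_def)
        show ?thesis using rep_in[OF E q] in_quotient_imp_subset[OF E q] by auto
      qed
      then show ?case using gen_op.hyps
        by (auto simp: clone_of_var_def intro!: quotientI wf_trm.wf_App)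
    qed
  qed
qed

lemma transfer:
  assumes A: "is_clone_alg ar A" and I: "clone_iso ar A B" and M: "carrier B = generated ar B"
  shows "carrier A = generated ar A"
proof -
  obtain h where b: "bij_betw h (carrier A) (carrier B)"
    and he: "\<forall>i\<ge>1. h (eop A i) = eop B i"
    and hs: "\<forall>s xs. length xs = ar s \<and> set xs \<subseteq> carrier A \<longrightarrow> h (sop A s xs) = sop B s (map h xs)"
    using I unfolding clone_iso_def by blast
  have inj: "inj_on h (carrier A)" and im: "h ` carrier A = carrier B" using b by (auto simp: bij_betw_def)
  have "d \<in> generated ar B \<Longrightarrow> \<forall>c\<in>carrier A. h c = d \<longrightarrow> c \<in> generated ar A" for d
  proof (induction rule: generated.induct)
    case (gen_e i)
    show ?case
    proof (intro ballI impI)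
      fix c assume c: "c \<in> carrier A" "h c = eop B i"
      then have "h c = h (eop A i)" using he gen_e by simp
      then have "c = eop A i" using inj c(1) cl_e[OF A gen_e] by (auto dest: inj_onD)
      then show "c \<in> generated ar A" using gen_e by (simp add: generated.gen_e)
    qed
  next
    case (gen_op ds s)
    show ?case
    proof (intro ballI impI)
      fix c assume c: "c \<in> carrier A" "h c = sop B s ds"
      define cs where "cs = map (inv_into (carrier A) h) ds"
      have dsB: "set ds \<subseteq> carrier B" using gen_op M by auto
      have "h (inv_into (carrier A) h d) = d" if "d \<in> set ds" for d
        using that dsB im by (intro f_inv_into_f) auto
      then have hcs: "map h cs = ds" unfolding cs_def by (simp add: map_idI)
      have csA: "set cs \<subseteq> carrier A"
      proof
        fix c' assume "c' \<in> set cs"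
        then obtain d where d: "d \<in> set ds" "c' = inv_into (carrier A) h d" by (auto simp: cs_def)
        then have "d \<in> h ` carrier A" using dsB im by auto
        then show "c' \<in> carrier A" unfolding d(2) by (rule inv_into_into)
      qed
      have lcs: "length cs = ar s" using gen_op.hyps by (simp add: cs_def)
      have "h (sop A s cs) = h c" using hs lcs csA hcs c(2) by auto
      then have "c = sop A s cs" using inj c(1) cl_s[OF A lcs csA] by (auto dest: inj_onD)
      moreover have "set cs \<subseteq> generated ar A"
      proof
        fix x assume x: "x \<in> set cs"
        then obtain d where d: "d \<in> set ds" "x = inv_into (carrier A) h d" by (auto simp: cs_def)
        have "d \<in> h ` carrier A" using d dsB im by auto
        then have "h x = d" using d(2) by (simp add: f_inv_into_f)
        then show "x \<in> generated ar A" using gen_op d(1) x csA by auto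
      qed
      then have "cs \<in> lists (generated ar A)" by (auto simp: in_lists_conv_set)
      ultimately show "c \<in> generated ar A" using lcs by (simp add: generated.gen_op)
    qed
  qed
  then have "carrier A \<subseteq> generated ar A" using im M by blast
  then show ?thesis using gen_sub[OF A] by blast
qed

theorem corollary11p9:
  fixes ar :: "'s \<Rightarrow> nat" and A :: "('s, 'c) clone_alg"
  assumes "is_clone_alg ar A"
  shows "minimal_clone_alg ar A \<longleftrightarrow>
         (\<exists>\<theta>. fi_congruence ar \<theta> \<and> clone_iso ar A (clone_of_var ar \<theta>))"
proof
  assume "minimal_clone_alg ar A"
  then show "\<exists>\<theta>. fi_congruence ar \<theta> \<and> clone_iso ar A (clone_of_var ar \<theta>)"
    using fwd[OF assms] th_fi[OF assms] unfolding minimal_clone_alg_def by blast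
next
  assume "\<exists>\<theta>. fi_congruence ar \<theta> \<and> clone_iso ar A (clone_of_var ar \<theta>)"
  then obtain \<theta> where "fi_congruence ar \<theta>" "clone_iso ar A (clone_of_var ar \<theta>)" by blast
  then show "minimal_clone_alg ar A"
    using transfer[OF assms] cov_min unfolding minimal_clone_alg_def by blast
qed

end
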